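(* Let $n$ be a positive odd integer. Then, modulo $\Phi_n(q)$, \[ \sum_{k=0}^{n-1}\frac{(q;q^4)_k^2}{(q^4;q^4)_k^2}(-q)^{k} \equiv\begin{cases} \dfrac{(q,q^2,-q^3,-q^4;q^4)_{(n-1)/8}}{(q^4;q^4)_{(n-1)/4}}\,q^{(1-n^2)/8} &\text{if } n\equiv 1\pmod 8,\\[8pt] \dfrac{(q,q^2,-q^3,-q^4;q^4)_{(3n-1)/8}}{(q^4;q^4)_{(3n-1)/4}}\,q^{(1-n^2)/8} &\text{if } n\equiv 3\pmod 8,\\[8pt] -\dfrac{(1-q^2)(-q^3,-q^4,q^5,q^6;q^4)_{(n-5)/8}}{(q^4;q^4)_{(n-5)/4}}\,q^{(9-n^2)/8} &\text{if } n\equiv 5\pmod 8,\\[8pt] -\dfrac{(1-q^2)(-q^3,-q^4,q^5,q^6;q^4)_{(3n-5)/8}}{(q^4;q^4)_{(3n-5)/4}}\,q^{(9-n^2)/8} &\text{if } n\equiv 7\pmod 8. \end{cases} \]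
   Context: For an indeterminate $a$ and a nonnegative integer $k$, $(a;q)_k=\prod_{j=0}^{k-1}(1-aq^j)$, with $(a;q)_0=1$, and $(a_1,\dots,a_m;q)_k=(a_1;q)_k\cdots(a_m;q)_k$. $\Phi_n(q)=\prod_{1\le j\le n,\ \gcd(j,n)=1}(q-e^{2\pi i j/n})$ is the $n$-th cyclotomic polynomial. A congruence between rational functions in $q$ (possibly involving negative powers of $q$) modulo a polynomial $P(q)$ means that the difference, written as a ratio of polynomials with denominator coprime to $P(q)$, has numerator divisible by $P(q)$. *)

theory Defs
  imports Complex_Main "HOL-Computational_Algebra.Polynomial_Factorial"
          "HOL-Computational_Algebra.Fraction_Field"
begin

type_synonym ratfun = "complex poly fract"

definition qvar :: ratfun where
  "qvar = Fract [:0, 1:] 1"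

definition qpoch :: "ratfun \<Rightarrow> ratfun \<Rightarrow> nat \<Rightarrow> ratfun" where
  "qpoch a b k = (\<Prod>j<k. (1 - a * b ^ j))"

definition cyclotomic :: "nat \<Rightarrow> complex poly" where
  "cyclotomic n = (\<Prod>j\<in>{j. 1 \<le> j \<and> j \<le> n \<and> coprime j n}.
      [:- cis (2 * pi * real j / real n), 1:])"

definition ratfun_cong :: "ratfun \<Rightarrow> ratfun \<Rightarrow> complex poly \<Rightarrow> bool" where
  "ratfun_cong x y P \<longleftrightarrow>
     (\<exists>A B. B \<noteq> 0 \<and> x - y = Fract A B \<and> coprime B P \<and> P dvd A)"

end

theory Submission
  imports Defs "HOL-Computational_Algebra.Field_as_Ring"
begin


definition cp :: "'a::comm_ring_1 \<Rightarrow> 'a \<Rightarrow> nat \<Rightarrow> 'a" where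
  "cp a b k = (\<Prod>j<k. 1 - a * b ^ j)"

definition tri :: "nat \<Rightarrow> nat" where "tri k = (\<Sum>j<k. j)"

lemma tri_Suc: "tri (Suc k) = tri k + k" by (simp add: tri_def)
lemma tri_0[simp]: "tri 0 = 0" by (simp add: tri_def)
lemma tri_2: "2 * tri k + k = k * k"
  by (induction k) (auto simp: tri_Suc algebra_simps)

lemma cp_0[simp]: "cp a b 0 = 1" by (simp add: cp_def)
lemma cp_Suc: "cp a b (Suc k) = cp a b k * (1 - a * b ^ k)"
  by (simp add: cp_def)

lemma cp_add: "cp a b (K + L) = cp a b K * cp (a * b ^ K) b L"
  by (induction L) (simp_all add: cp_Suc power_add mult.assoc)

lemma coeff_mult_lin0: "coeff (P * [:1, d:]) 0 = coeff (P::'a::comm_ring_1 poly) 0"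
  by (simp add: mult_pCons_right)
lemma coeff_mult_linS: "coeff (P * [:1, d:]) (Suc k) = coeff P (Suc k) + d * coeff (P::'a::comm_ring_1 poly) k"
  by (simp add: mult_pCons_right)

lemma prod_shift_aux:
  fixes p :: "'a::comm_ring_1"
  shows "(\<Prod>j<Suc k. p ^ Suc M - p ^ j) = (p ^ Suc M - 1) * p ^ k * (\<Prod>j<k. p ^ M - p ^ j)"
proof -
  have "(\<Prod>j<Suc k. p ^ Suc M - p ^ j) = (p ^ Suc M - 1) * (\<Prod>j<k. p ^ Suc M - p ^ Suc j)"
    by (subst prod.lessThan_Suc_shift) simp
  also have "(\<Prod>j<k. p ^ Suc M - p ^ Suc j) = (\<Prod>j<k. p * (p ^ M - p ^ j))"
    by (simp add: algebra_simps)
  also have "\<dots> = p ^ k * (\<Prod>j<k. p ^ M - p ^ j)"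
    by (simp add: prod.distrib)
  finally show ?thesis by (simp add: mult.assoc)
qed

lemma coeffA:
  fixes c p :: "'a::comm_ring_1"
  shows "coeff (\<Prod>j<M. [:1, -(c * p ^ j):]) k * cp p p k = c ^ k * (\<Prod>j<k. p ^ M - p ^ j)"
proof (induction M arbitrary: k)
  case 0
  then show ?case
  proof (cases k)
    case (Suc k')
    have "(\<Prod>j<Suc k'. p ^ 0 - p ^ j) = (p^0 - p^0) * (\<Prod>j<k'. p ^ 0 - p ^ Suc j)"
      by (rule prod.lessThan_Suc_shift)
    then show ?thesis by (simp add: Suc)
  qed simp
next
  case (Suc M)
  let ?P = "\<Prod>j<M. [:1, -(c * p ^ j):]"
  have eq: "(\<Prod>j<Suc M. [:1, -(c * p ^ j):]) = ?P * [:1, -(c * p ^ M):]" by simp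
  show ?case
  proof (cases k)
    case 0
    then show ?thesis using Suc.IH[of 0] by (simp add: eq coeff_mult_lin0)
  next
    case (Suc k')
    have IH1: "coeff ?P (Suc k') * cp p p (Suc k') = c ^ Suc k' * (\<Prod>j<Suc k'. p ^ M - p ^ j)"
      by (rule Suc.IH)
    have IH2: "coeff ?P k' * cp p p k' = c ^ k' * (\<Prod>j<k'. p ^ M - p ^ j)"
      by (rule Suc.IH)
    have "coeff (\<Prod>j<Suc M. [:1, -(c * p ^ j):]) k * cp p p k
        = coeff ?P (Suc k') * cp p p (Suc k') - c * p ^ M * (coeff ?P k' * cp p p k') * (1 - p * p ^ k')"
      by (simp add: eq coeff_mult_linS Suc cp_Suc algebra_simps)
    also have "\<dots> = c ^ Suc k' * (\<Prod>j<k'. p ^ M - p ^ j) * (p ^ M - p ^ k')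
         - c * p ^ M * (c ^ k' * (\<Prod>j<k'. p ^ M - p ^ j)) * (1 - p * p ^ k')"
      by (simp add: IH1 IH2)
    also have "\<dots> = c ^ Suc k' * ((p ^ Suc M - 1) * p ^ k' * (\<Prod>j<k'. p ^ M - p ^ j))"
      by (simp add: algebra_simps)
    also have "\<dots> = c ^ k * (\<Prod>j<k. p ^ Suc M - p ^ j)"
      by (simp only: Suc prod_shift_aux)
    finally show ?thesis .
  qed
qed

lemma L1:
  fixes p :: "'a::comm_ring_1"
  assumes "k \<le> N"
  shows "(\<Prod>j<k. p ^ N - p ^ j) * cp p p (N - k) = (-1) ^ k * p ^ tri k * cp p p N"
  using assms
proof (induction k)
  case 0 then show ?case by simp
next
  case (Suc k)
  then obtain m where N: "N = Suc k + m" by (metis le_iff_add)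
  have "(\<Prod>j<Suc k. p ^ N - p ^ j) * cp p p (N - Suc k)
      = (\<Prod>j<k. p ^ N - p ^ j) * (p ^ N - p ^ k) * cp p p m" by (simp add: N)
  also have "p ^ N - p ^ k = - (p ^ k * (1 - p * p ^ m))"
    by (simp add: N algebra_simps power_add)
  also have "(\<Prod>j<k. p ^ N - p ^ j) * - (p ^ k * (1 - p * p ^ m)) * cp p p m
      = (- (p ^ k)) * ((\<Prod>j<k. p ^ N - p ^ j) * cp p p (N - k))"
    by (simp add: N cp_Suc algebra_simps)
  also have "\<dots> = (-1) ^ Suc k * p ^ tri (Suc k) * cp p p N"
    using Suc by (simp add: tri_Suc power_add algebra_simps)
  finally show ?case .
qed



lemma prod_double:
  "(\<Prod>i<2*(M::nat). f i) = (\<Prod>j<M. f (2*j) * f (2*j+1))"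
  by (induction M) (simp_all add: algebra_simps)

lemma exp_key:
  fixes k m :: nat
  shows "2*(k+m)*(k+m) + 3*k + 8*tri k = 2*m + 4*tri k + 4*tri m + k*(4*(k+m)+1)"
  using tri_2[of k] tri_2[of m] by (simp add: algebra_simps)

lemma ring_aux1:
  fixes s X P G Z :: "'a::comm_ring_1"
  assumes "s * s = 1"
  shows "Z * (X * s * P * G)^2 * (s * X) = s * (Z * X^3 * P^2) * G^2"
proof -
  have "Z * (X * s * P * G)^2 * (s * X) = (s * s) * s * (Z * X^3 * P^2) * G^2"
    by (simp add: power2_eq_square power3_eq_cube algebra_simps)
  then show ?thesis using assms by simp
qed

lemma main_id:
  fixes z :: complex and M :: nat
  defines "p \<equiv> z^4" and "r \<equiv> -(z^2)"
  assumes h: "z ^ (4*M+1) = 1"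
  and nz: "\<And>k. k \<le> M \<Longrightarrow> cp p p k \<noteq> 0"
  shows "z^(2*M*M) * (\<Sum>k\<le>M. (cp z p k)^2 / (cp p p k)^2 * (-z)^k) * (cp r r M)^2
         = (-1)^M * r^tri M * cp r r (2*M)"
proof -
  define A where "A = (\<Prod>j<M. [:1, -(1 * p ^ j):])"
  define B where "B = (\<Prod>j<M. [:1, -(r * p ^ j):])"
  define C where "C = (\<Prod>i<2*M. [:1, -(1 * r ^ i):])"
  define Y where "Y = (\<lambda>k. \<Prod>j<k. p ^ M - p ^ j)"
  have r2: "r^2 = p" by (simp add: r_def p_def flip: power_mult)
  have AB: "A * B = C"
  proof -
    have "C = (\<Prod>j<M. [:1, -(1 * r ^ (2*j)):] * [:1, -(1 * r ^ (2*j+1)):])"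
      unfolding C_def by (rule prod_double)
    also have "\<dots> = (\<Prod>j<M. [:1, -(1 * p ^ j):] * [:1, -(r * p ^ j):])"
    proof (rule prod.cong)
      fix j
      have "r ^ (2*j) = p ^ j" by (simp add: power_mult r2)
      moreover have "r ^ (2*j+1) = r * p ^ j" by (simp add: power_mult r2)
      ultimately show "[:1, -(1 * r ^ (2*j)):] * [:1, -(1 * r ^ (2*j+1)):] = [:1, -(1 * p ^ j):] * [:1, -(r * p ^ j):]"
        by (simp only: mult_1)
    qed simp
    also have "\<dots> = A * B" by (simp only: A_def B_def prod.distrib)
    finally show ?thesis by simp
  qed
  have zpM: "z * p ^ M = 1"
  proof -
    have "z * p ^ M = z ^ (4*M+1)" by (simp add: p_def power_mult power_add)
    then show ?thesis using h by (simp only:)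
  qed
  have termk: "z^(2*M*M) * ((cp z p k)^2 / (cp p p k)^2 * (-z)^k) = coeff A k * coeff B (M - k)"
    if k: "k \<le> M" for k
  proof -
    define m where "m = M - k"
    have Mkm: "M = k + m" using k by (simp add: m_def)
    have ck: "cp p p k \<noteq> 0" using nz k by simp
    have cm: "cp p p m \<noteq> 0" using nz m_def by simp
    have a1: "coeff A k * cp p p k = Y k" using coeffA[of 1 p M k] by (simp add: A_def Y_def)
    have b1: "coeff B m * cp p p m = r^m * Y m" using coeffA[of r p M m] by (simp add: B_def Y_def)
    have l1: "Y k * cp p p m = (-1)^k * p^tri k * cp p p M"
      using L1[of k M p] k by (simp add: Y_def m_def)
    have l2: "Y m * cp p p k = (-1)^m * p^tri m * cp p p M"
    proof -
      have "M - m = k" using k by (simp add: m_def)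
      moreover have "m \<le> M" by (simp add: m_def)
      ultimately show ?thesis using L1[of m M p] by (simp add: Y_def)
    qed
    have zy: "cp z p k = z^k * Y k"
    proof -
      have "cp z p k = (\<Prod>j<k. z * (p ^ M - p ^ j))"
        unfolding cp_def
      proof (rule prod.cong)
        fix j show "1 - z * p ^ j = z * (p ^ M - p ^ j)"
          using zpM by (simp add: algebra_simps)
      qed simp
      then show ?thesis by (simp add: prod.distrib Y_def)
    qed
    define G where "G = cp p p M / (cp p p k * cp p p m)"
    have Yk: "Y k = (-1)^k * p^tri k * G * cp p p k"
      using l1 ck cm by (simp add: G_def field_simps)
    have Ym: "Y m = (-1)^m * p^tri m * G * cp p p m"
      using l2 ck cm by (simp add: G_def field_simps)
    have cA: "coeff A k = (-1)^k * p^tri k * G"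
      using a1 Yk ck by (simp add: field_simps)
    have cB: "coeff B m = r^m * (-1)^m * p^tri m * G"
      using b1 Ym cm by (simp add: field_simps)
    have rm: "r^m * (-1)^m = z^(2*m)"
    proof -
      have "r^m * (-1)^m = (r * (-1))^m" by (simp only: power_mult_distrib)
      also have "r * (-1) = z^2" by (simp add: r_def)
      finally show ?thesis by (simp add: power_mult)
    qed
    have zexp: "z^(2*M*M) * z^(3*k) * z^(8*tri k) = z^(2*m) * z^(4*tri k) * z^(4*tri m)"
    proof -
      have e: "2*M*M + 3*k + 8*tri k = (2*m + 4*tri k + 4*tri m) + (4*M+1)*k"
        using exp_key[of k m] Mkm by (simp add: algebra_simps)
      have "z^(2*M*M) * z^(3*k) * z^(8*tri k) = z^(2*M*M + 3*k + 8*tri k)"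
        by (simp only: power_add)
      also have "\<dots> = z^(2*m) * z^(4*tri k) * z^(4*tri m) * (z^(4*M+1))^k"
        by (simp only: e power_add power_mult)
      finally show ?thesis using h by simp
    qed
    have q1: "cp z p k / cp p p k = z^k * (-1)^k * p^tri k * G"
      using zy Yk ck by simp
    have mz: "(-z)^k = (-1)^k * z^k" by (metis mult_minus1 power_mult_distrib)
    have ss: "(-1::complex)^k * (-1)^k = 1" by (simp flip: power_mult_distrib)
    have z3: "z^(3*k) = (z^k)^3" by (simp add: power_mult[symmetric] mult.commute)
    have z8: "z^(8*tri k) = (p^tri k)^2" by (simp add: p_def power_mult[symmetric] mult.commute)
    have z8': "z^(4*tri k) * z^(4*tri m) = p^tri k * p^tri m" by (simp add: p_def power_mult)
    have "z^(2*M*M) * ((cp z p k)^2 / (cp p p k)^2 * (-z)^k)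
        = z^(2*M*M) * (cp z p k / cp p p k)^2 * ((-1)^k * z^k)"
      using mz by (simp add: power_divide)
    also have "\<dots> = (-1)^k * (z^(2*M*M) * z^(3*k) * z^(8*tri k)) * G^2"
      unfolding q1 z3 z8 by (rule ring_aux1[OF ss])
    also have "\<dots> = (-1)^k * (z^(2*m) * z^(4*tri k) * z^(4*tri m)) * G^2"
      by (simp only: zexp)
    also have "\<dots> = ((-1)^k * p^tri k * G) * (r^m * (-1)^m * p^tri m * G)"
      unfolding rm[symmetric] p_def by (simp add: power2_eq_square algebra_simps flip: power_mult)
    also have "\<dots> = coeff A k * coeff B (M - k)"
      by (simp add: cA cB flip: m_def)
    finally show ?thesis .
  qed
  have sum1: "z^(2*M*M) * (\<Sum>k\<le>M. (cp z p k)^2 / (cp p p k)^2 * (-z)^k) = coeff C M"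
  proof -
    have "z^(2*M*M) * (\<Sum>k\<le>M. (cp z p k)^2 / (cp p p k)^2 * (-z)^k)
        = (\<Sum>k\<le>M. coeff A k * coeff B (M - k))"
      unfolding sum_distrib_left by (rule sum.cong) (simp_all only: atMost_iff termk)
    also have "\<dots> = coeff (A * B) M" by (simp add: coeff_mult)
    finally show ?thesis by (simp add: AB)
  qed
  have c1: "coeff C M * cp r r M = (\<Prod>j<M. r ^ (2*M) - r ^ j)"
    using coeffA[of 1 r "2*M" M] by (simp add: C_def)
  have c2: "(\<Prod>j<M. r ^ (2*M) - r ^ j) * cp r r M = (-1)^M * r ^ tri M * cp r r (2*M)"
    using L1[of M "2*M" r] by simp
  have "coeff C M * (cp r r M)^2 = (coeff C M * cp r r M) * cp r r M"
    by (simp add: power2_eq_square)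
  also have "\<dots> = (-1)^M * r ^ tri M * cp r r (2*M)" using c1 c2 by simp
  finally show ?thesis using sum1 by simp
qed


lemma prod_rev: "(\<Prod>i<K. g (K - Suc i)) = (\<Prod>i<(K::nat). g i)"
  by (rule prod.reindex_bij_witness[where i="\<lambda>i. K - Suc i" and j="\<lambda>i. K - Suc i"]) auto

lemma prod_geom: "(\<Prod>i<K. y * b ^ i) = y ^ K * b ^ tri K"
  by (induction K) (simp_all add: tri_Suc power_add algebra_simps)

lemma cp_rev:
  fixes x y b :: "'a::comm_ring_1"
  assumes "\<And>i. i < K \<Longrightarrow> x * b ^ (K - Suc i) * (y * b ^ i) = 1"
  shows "cp x b K * (y ^ K * b ^ tri K) = (-1) ^ K * cp y b K"
proof -
  have "cp x b K = (\<Prod>i<K. 1 - x * b ^ (K - Suc i))"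
    unfolding cp_def by (rule prod_rev[symmetric])
  then have "cp x b K * (y ^ K * b ^ tri K) = (\<Prod>i<K. 1 - x * b ^ (K - Suc i)) * (\<Prod>i<K. y * b ^ i)"
    by (simp only: prod_geom)
  also have "\<dots> = (\<Prod>i<K. (1 - x * b ^ (K - Suc i)) * (y * b ^ i))"
    by (rule prod.distrib[symmetric])
  also have "\<dots> = (\<Prod>i<K. (-1) * (1 - y * b ^ i))"
  proof (rule prod.cong)
    fix i assume "i \<in> {..<K}"
    then have "x * b ^ (K - Suc i) * (y * b ^ i) = 1" using assms by simp
    then show "(1 - x * b ^ (K - Suc i)) * (y * b ^ i) = (-1) * (1 - y * b ^ i)"
      by (simp add: algebra_simps)
  qed simp
  also have "\<dots> = (\<Prod>i<K. (-1::'a)) * (\<Prod>i<K. 1 - y * b ^ i)"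
    by (rule prod.distrib)
  also have "\<dots> = (-1) ^ K * cp y b K"
    by (simp only: cp_def prod_constant card_lessThan)
  finally show ?thesis .
qed

lemma cp_even: "cp r r (2*L) = cp r (r^2) L * cp (r^2) (r^2) L"
proof -
  have "cp r r (2*L) = (\<Prod>j<L. (1 - r * r ^ (2*j)) * (1 - r * r ^ (2*j+1)))"
    unfolding cp_def by (rule prod_double)
  also have "\<dots> = (\<Prod>j<L. (1 - r * (r^2) ^ j) * (1 - r^2 * (r^2) ^ j))"
    by (simp add: power_mult power2_eq_square algebra_simps)
  finally show ?thesis by (simp add: cp_def prod.distrib)
qed

lemma cp_sq: "cp a b L * cp (-a) b L = cp (a^2) (b^2) L"
  unfolding cp_def prod.distrib[symmetric]
  by (rule prod.cong) (simp_all add: power_mult power2_eq_square algebra_simps)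



lemma rpow: "(-(z^2))^t = (-1)^t * (z::complex)^(2*t)"
proof -
  have "(-(z^2))^t = ((-1) * z^2)^t" by simp
  also have "\<dots> = (-1)^t * (z^2)^t" by (rule power_mult_distrib)
  finally show ?thesis by (simp add: power_mult)
qed

lemma neg1_even: "even t \<Longrightarrow> (-1::complex)^t = 1" by simp

lemma even_case:
  fixes z :: complex and K :: nat
  defines "p \<equiv> z^4" and "r \<equiv> -(z^2)" and "M \<equiv> 2*K"
  assumes h: "z^(8*K+1) = 1"
  and nz: "\<And>k. k \<le> M \<Longrightarrow> cp p p k \<noteq> 0"
  and nzr: "cp r r M \<noteq> 0"
  shows "(\<Sum>k\<le>M. (cp z p k)^2 / (cp p p k)^2 * (-z)^k) * z^(2*M*M + 4*K + 8*tri K)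
     = cp z p K * cp (z^2) p K * cp (-(z^3)) p K * cp (-(z^4)) p K / cp p p (2*K) * z^(2*tri M)"
proof -
  define S where "S = (\<Sum>k\<le>M. (cp z p k)^2 / (cp p p k)^2 * (-z)^k)"
  define a where "a = cp (-(z^2)) p K"
  define b where "b = cp p p K"
  define X1 where "X1 = cp (-(z^2) * p^K) p K"
  define X2 where "X2 = cp (p * p^K) p K"
  define cz where "cz = cp z p K"
  define c2 where "c2 = cp (z^2) p K"
  define c3 where "c3 = cp (-(z^3)) p K"
  define c4 where "c4 = cp (-(z^4)) p K"
  have h': "z^(4*M+1) = 1" using h by (simp add: M_def)
  have mid: "z^(2*M*M) * S * (cp r r M)^2 = (-1)^M * r^tri M * cp r r (2*M)"
    unfolding S_def p_def r_def by (rule main_id[OF h' nz[unfolded p_def]])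
  have r2: "r^2 = p" by (simp add: r_def p_def flip: power_mult)
  have cM: "cp r r M = a * b"
    using cp_even[of r K] by (simp add: M_def a_def b_def r_def p_def)
  have c2M: "cp r r (2*M) = cp (-(z^2)) p (2*K) * cp p p (2*K)"
    using cp_even[of r M] by (simp add: M_def r_def p_def)
  have s1: "cp (-(z^2)) p (2*K) = a * X1"
    using cp_add[of "-(z^2)" p K K] by (simp add: a_def X1_def mult_2)
  have s2: "cp p p (2*K) = b * X2"
    using cp_add[of p p K K] by (simp add: b_def X2_def mult_2)
  have ab: "a * b \<noteq> 0" using nzr cM by simp
  have A1: "S * z^(2*M*M) * (a*b) = (-1)^M * r^tri M * (X1 * X2)"
  proof -
    have "(S * z^(2*M*M) * (a*b)) * (a*b) = ((-1)^M * r^tri M * (X1 * X2)) * (a*b)"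
      using mid unfolding cM c2M s1 s2 by (simp add: power2_eq_square algebra_simps)
    then show ?thesis using ab by simp
  qed
  have A2: "X1 * (z^(3*K) * p^tri K) = c3"
  proof -
    have "X1 * ((-(z^3))^K * p^tri K) = (-1)^K * c3"
      unfolding X1_def c3_def
    proof (rule cp_rev)
      fix i assume i: "i < K"
      have e: "4 * (K + (K - Suc i) + i) + 2 + 3 = 8*K+1" using i by simp
      have "-(z^2) * p^K * p^(K - Suc i) * (-(z^3) * p^i) = z^(4 * (K + (K - Suc i) + i) + 2 + 3)"
        by (simp add: p_def power_add power_mult[symmetric] algebra_simps)
      also have "\<dots> = 1" by (simp only: e h)
      finally show "-(z^2) * p^K * p^(K - Suc i) * (-(z^3) * p^i) = 1" .
    qed
    moreover have "(-(z^3))^K = (-1)^K * z^(3*K)"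
      by (metis mult_minus1 power_mult power_mult_distrib mult.commute)
    ultimately have "(-1)^K * (X1 * (z^(3*K) * p^tri K)) = (-1)^K * c3"
      by (simp add: algebra_simps)
    then show ?thesis by simp
  qed
  have A3: "X2 * (z^K * p^tri K) = (-1)^K * cz"
    unfolding X2_def cz_def
  proof (rule cp_rev)
    fix i assume i: "i < K"
    have e: "4 * (1 + K + (K - Suc i) + i) + 1 = 8*K+1" using i by simp
    have "p * p^K * p^(K - Suc i) * (z * p^i) = p^(1 + K + (K - Suc i) + i) * z"
      by (simp only: power_add power_one_right ac_simps)
    also have "\<dots> = z^(4 * (1 + K + (K - Suc i) + i) + 1)"
      by (simp only: p_def power_add power_mult power_one_right)
    also have "\<dots> = 1" by (simp only: e h)
    finally show "p * p^K * p^(K - Suc i) * (z * p^i) = 1" .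
  qed
  have E: "z^(2*M*M + 4*K + 8*tri K) = z^(2*M*M) * (z^(3*K) * p^tri K) * (z^K * p^tri K)"
  proof -
    have ee: "2*M*M + 4*K + 8*tri K = 2*M*M + (3*K + 4*tri K) + (K + 4*tri K)" by simp
    show ?thesis by (simp only: ee power_add p_def power_mult[symmetric])
  qed
  have A4: "S * z^(2*M*M + 4*K + 8*tri K) * (a*b) = (-1)^M * r^tri M * (-1)^K * (c3 * cz)"
  proof -
    have "S * z^(2*M*M + 4*K + 8*tri K) * (a*b)
        = (S * z^(2*M*M) * (a*b)) * (z^(3*K) * p^tri K) * (z^K * p^tri K)"
      unfolding E by (simp only: ac_simps)
    also have "\<dots> = (-1)^M * r^tri M * ((X1 * (z^(3*K) * p^tri K)) * (X2 * (z^K * p^tri K)))"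
      unfolding A1 by (simp only: ac_simps)
    also have "\<dots> = (-1)^M * r^tri M * (-1)^K * (c3 * cz)"
      unfolding A2 A3 by (simp only: ac_simps)
    finally show ?thesis .
  qed
  have c2Kne: "cp p p (2*K) \<noteq> 0" using nz by (simp add: M_def)
  have sq1: "c2 * a = cp p (p^2) K"
    using cp_sq[of "z^2" p K] by (simp add: c2_def a_def p_def flip: power_mult)
  have sq2: "b * c4 = cp (p^2) (p^2) K"
    using cp_sq[of p p K] by (simp add: b_def c4_def p_def)
  have ev: "cp p p (2*K) = cp p (p^2) K * cp (p^2) (p^2) K" by (rule cp_even)
  have A5: "cz * c2 * c3 * c4 / cp p p (2*K) * (a*b) = cz * c3"
  proof -
    have "cz * c2 * c3 * c4 / cp p p (2*K) * (a*b) = cz * c3 * ((c2 * a) * (b * c4)) / cp p p (2*K)"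
      by (simp add: algebra_simps)
    also have "\<dots> = cz * c3" using c2Kne by (simp add: sq1 sq2 ev)
    finally show ?thesis .
  qed
  have sgn: "(-1)^M * r^tri M * (-1)^K = z^(2*tri M)"
  proof -
    have t: "2 * tri M + M = M * M" by (rule tri_2)
    have "even (M + tri M + K)"
    proof -
      have "tri M + K = 2*K*K" using t by (simp add: M_def algebra_simps)
      then have "M + tri M + K = 2*(K + K*K)" by (simp add: M_def)
      then show ?thesis by simp
    qed
    then have "(-1::complex)^(M + tri M + K) = 1" by simp
    then show ?thesis by (simp add: r_def rpow power_add algebra_simps)
  qed
  have "S * z^(2*M*M + 4*K + 8*tri K) * (a*b) = ((-1)^M * r^tri M * (-1)^K) * (c3 * cz)"
    unfolding A4 by (simp only: ac_simps)
  also have "\<dots> = z^(2*tri M) * (cz * c3)" unfolding sgn by (simp only: ac_simps)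
  also have "\<dots> = z^(2*tri M) * (cz * c2 * c3 * c4 / cp p p (2*K) * (a*b))" by (simp only: A5)
  also have "\<dots> = (cz * c2 * c3 * c4 / cp p p (2*K) * z^(2*tri M)) * (a*b)" by (simp only: ac_simps)
  finally have "S * z^(2*M*M + 4*K + 8*tri K) * (a*b) = (cz * c2 * c3 * c4 / cp p p (2*K) * z^(2*tri M)) * (a*b)" .
  then have "S * z^(2*M*M + 4*K + 8*tri K) = cz * c2 * c3 * c4 / cp p p (2*K) * z^(2*tri M)"
    using ab mult_right_cancel by blast
  then show ?thesis unfolding S_def cz_def c2_def c3_def c4_def .
qed



lemma odd_case:
  fixes z :: complex and K :: nat
  defines "p \<equiv> z^4" and "r \<equiv> -(z^2)" and "M \<equiv> 2*K+1"
  assumes h: "z^(8*K+5) = 1"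
  and nz: "\<And>k. k \<le> M \<Longrightarrow> cp p p k \<noteq> 0"
  and nzr: "cp r r M \<noteq> 0"
  shows "(\<Sum>k\<le>M. (cp z p k)^2 / (cp p p k)^2 * (-z)^k) * z^(2*M*M + (3*K + 4*tri K) + (Suc K + 4*tri (Suc K)))
     = -((1 - z^2) * cp (-(z^3)) p K * cp (-(z^4)) p K * cp (z^5) p K * cp (z^6) p K / cp p p (2*K)) * z^(2*tri M + 1)"
proof -
  define S where "S = (\<Sum>k\<le>M. (cp z p k)^2 / (cp p p k)^2 * (-z)^k)"
  define a where "a = cp (-(z^2)) p K"
  define b where "b = cp p p K"
  define w where "w = 1 + z^(4*K+2)"
  define X1 where "X1 = cp (-(z^2) * p^K * p) p K"
  define X2 where "X2 = cp (p * p^K) p (Suc K)"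
  define c2 where "c2 = cp (z^2) p K"
  define c3 where "c3 = cp (-(z^3)) p K"
  define c4 where "c4 = cp (-(z^4)) p K"
  define c5 where "c5 = cp (z^5) p K"
  define c6 where "c6 = cp (z^6) p K"
  have h': "z^(4*M+1) = 1" using h by (simp add: M_def add.commute)
  have mid: "z^(2*M*M) * S * (cp r r M)^2 = (-1)^M * r^tri M * cp r r (2*M)"
    unfolding S_def p_def r_def by (rule main_id[OF h' nz[unfolded p_def]])
  have pK: "p^K = z^(4*K)" by (simp add: p_def power_mult)
  have cM: "cp r r M = a * b * w"
  proof -
    have "cp r r M = cp r r (2*K) * (1 - r * r^(2*K))" by (simp add: M_def cp_Suc)
    also have "cp r r (2*K) = a * b"
      using cp_even[of r K] by (simp add: a_def b_def r_def p_def)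
    also have "1 - r * r^(2*K) = w"
    proof -
      have "r * r^(2*K) = r^(Suc (2*K))" by simp
      also have "\<dots> = (-1)^(Suc (2*K)) * z^(2 * Suc (2*K))" unfolding r_def by (rule rpow)
      also have "\<dots> = -(z^(4*K+2))" by simp
      finally show ?thesis by (simp add: w_def)
    qed
    finally show ?thesis .
  qed
  have c2M: "cp r r (2*M) = cp (-(z^2)) p M * cp p p M"
    using cp_even[of r M] by (simp add: r_def p_def)
  have s1: "cp (-(z^2)) p M = a * w * X1"
  proof -
    have "cp (-(z^2)) p M = a * cp (-(z^2) * p^K) p (1 + K)"
      using cp_add[of "-(z^2)" p K "1+K"] by (simp add: a_def M_def mult_2)
    also have "cp (-(z^2) * p^K) p (1 + K) = cp (-(z^2) * p^K) p 1 * X1"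
      using cp_add[of "-(z^2) * p^K" p 1 K] by (simp add: X1_def)
    also have "cp (-(z^2) * p^K) p 1 = w"
      by (simp add: cp_def w_def pK flip: power_add)
    finally show ?thesis by (simp add: ac_simps)
  qed
  have s2: "cp p p M = b * X2"
    using cp_add[of p p K "Suc K"] by (simp add: b_def X2_def M_def mult_2)
  have abw: "a * b * w \<noteq> 0" using nzr cM by simp
  have A1: "S * z^(2*M*M) * (a*b*w) = (-1)^M * r^tri M * (X1 * X2)"
  proof -
    have "(S * z^(2*M*M) * (a*b*w)) * (a*b*w) = ((-1)^M * r^tri M * (X1 * X2)) * (a*b*w)"
      using mid unfolding cM c2M s1 s2 by (simp add: power2_eq_square algebra_simps)
    then show ?thesis using abw mult_right_cancel by blast
  qed
  have A2: "X1 * (z^(3*K) * p^tri K) = c3"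
  proof -
    have "X1 * ((-(z^3))^K * p^tri K) = (-1)^K * c3"
      unfolding X1_def c3_def
    proof (rule cp_rev)
      fix i assume i: "i < K"
      have e: "4 * (K + 1 + (K - Suc i) + i) + 2 + 3 = 8*K+5" using i by simp
      have "-(z^2) * p^K * p * p^(K - Suc i) * (-(z^3) * p^i) = z^(4 * (K + 1 + (K - Suc i) + i) + 2 + 3)"
        by (simp add: p_def power_add power_mult[symmetric] algebra_simps)
      also have "\<dots> = 1" by (simp only: e h)
      finally show "-(z^2) * p^K * p * p^(K - Suc i) * (-(z^3) * p^i) = 1" .
    qed
    moreover have "(-(z^3))^K = (-1)^K * z^(3*K)"
      by (metis mult_minus1 power_mult power_mult_distrib mult.commute)
    ultimately have "(-1)^K * (X1 * (z^(3*K) * p^tri K)) = (-1)^K * c3"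
      by (simp add: algebra_simps)
    then show ?thesis by simp
  qed
  have A3: "X2 * (z^(Suc K) * p^tri (Suc K)) = (-1)^(Suc K) * cp z p (Suc K)"
    unfolding X2_def
  proof (rule cp_rev)
    fix i assume i: "i < Suc K"
    have e: "4 * (1 + K + (Suc K - Suc i) + i) + 1 = 8*K+5" using i by simp
    have "p * p^K * p^(Suc K - Suc i) * (z * p^i) = p^(1 + K + (Suc K - Suc i) + i) * z"
      by (simp only: power_add power_one_right ac_simps)
    also have "\<dots> = z^(4 * (1 + K + (Suc K - Suc i) + i) + 1)"
      by (simp only: p_def power_add power_mult power_one_right)
    also have "\<dots> = 1" by (simp only: e h)
    finally show "p * p^K * p^(Suc K - Suc i) * (z * p^i) = 1" .
  qed
  have cz1: "cp z p (Suc K) = (1 - z) * c5"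
    using cp_add[of z p 1 K] by (simp add: c5_def cp_def p_def flip: power_Suc)
  have A4: "S * z^(2*M*M + (3*K + 4*tri K) + (Suc K + 4*tri (Suc K))) * (a*b*w)
      = (-1)^M * r^tri M * (-1)^(Suc K) * (c3 * ((1 - z) * c5))"
  proof -
    have E: "z^(2*M*M + (3*K + 4*tri K) + (Suc K + 4*tri (Suc K)))
       = z^(2*M*M) * (z^(3*K) * p^tri K) * (z^(Suc K) * p^tri (Suc K))"
      by (simp only: power_add p_def power_mult[symmetric])
    have "S * z^(2*M*M + (3*K + 4*tri K) + (Suc K + 4*tri (Suc K))) * (a*b*w)
        = (S * z^(2*M*M) * (a*b*w)) * (z^(3*K) * p^tri K) * (z^(Suc K) * p^tri (Suc K))"
      unfolding E by (simp only: ac_simps)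
    also have "\<dots> = (-1)^M * r^tri M * ((X1 * (z^(3*K) * p^tri K)) * (X2 * (z^(Suc K) * p^tri (Suc K))))"
      unfolding A1 by (simp only: ac_simps)
    also have "\<dots> = (-1)^M * r^tri M * (-1)^(Suc K) * (c3 * ((1 - z) * c5))"
      unfolding A2 A3 cz1 by (simp only: ac_simps)
    finally show ?thesis .
  qed
  have c2Kne: "cp p p (2*K) \<noteq> 0" using nz by (simp add: M_def)
  have sq1: "c2 * a = cp p (p^2) K"
    using cp_sq[of "z^2" p K] by (simp add: c2_def a_def p_def flip: power_mult)
  have sq2: "b * c4 = cp (p^2) (p^2) K"
    using cp_sq[of p p K] by (simp add: b_def c4_def p_def)
  have ev: "cp p p (2*K) = cp p (p^2) K * cp (p^2) (p^2) K" by (rule cp_even)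
  have c26: "(1 - z^2) * c6 = c2 * (1 - z^(4*K+2))"
  proof -
    have "cp (z^2) p (1 + K) = (1 - z^2) * c6"
      using cp_add[of "z^2" p 1 K] by (simp add: c6_def cp_def p_def flip: power_add)
    moreover have "cp (z^2) p (1 + K) = c2 * (1 - z^(4*K+2))"
      by (simp add: cp_Suc c2_def pK flip: power_add)
    ultimately show ?thesis by simp
  qed
  have wz: "w * (1 - z^(4*K+2)) * z = z - 1"
  proof -
    have q0: "(4*K+2)+(4*K+2) = 8*K+4" by simp
    have q1: "z^(4*K+2) * z^(4*K+2) = z^(8*K+4)" using q0 by (metis power_add)
    have q2: "z^(8*K+5) = z^(8*K+4) * z^1" unfolding power_add[symmetric] by (simp add: add.commute)
    have "w * (1 - z^(4*K+2)) * z = z - z^(4*K+2) * z^(4*K+2) * z"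
      by (simp add: w_def algebra_simps)
    also have "\<dots> = z - z^(8*K+5)" by (simp only: q1 q2 power_one_right)
    finally have "w * (1 - z^(4*K+2)) * z = z - z^(8*K+5)" .
    then show ?thesis using h by simp
  qed
  define T where "T = -((1 - z^2) * c3 * c4 * c5 * c6 / cp p p (2*K))"
  have A5: "T * (a*b*w*z) = c3 * ((1 - z) * c5)"
  proof -
    define D where "D = cp p p (2*K)"
    have D: "D = (c2 * a) * (b * c4)" unfolding D_def ev sq1 sq2 ..
    have Dne: "D \<noteq> 0" using c2Kne by (simp add: D_def)
    have TD: "T * D = -((1 - z^2) * c6 * (c3 * c4 * c5))"
      unfolding T_def D_def[symmetric] using Dne by (simp add: field_simps)
    have "T * (a*b*w*z) * D = (T * D) * (a*b*w*z)" by (simp only: ac_simps)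
    also have "\<dots> = -(c2 * (1 - z^(4*K+2)) * (c3 * c4 * c5)) * (a*b*w*z)"
      unfolding TD c26 ..
    also have "\<dots> = -(c3 * c5 * (w * (1 - z^(4*K+2)) * z)) * ((c2 * a) * (b * c4))"
      by (simp add: algebra_simps)
    also have "\<dots> = (c3 * ((1 - z) * c5)) * D"
      unfolding wz D[symmetric] by (simp add: algebra_simps)
    finally show ?thesis using Dne mult_right_cancel by blast
  qed
  have sgn: "(-1)^M * r^tri M * (-1)^(Suc K) = z^(2*tri M)"
  proof -
    have t: "2 * tri M + M = M * M" by (rule tri_2)
    have "even (M + tri M + Suc K)"
    proof -
      have "2 * tri M = 2 * (2*K*K + K)" using t by (simp add: M_def algebra_simps)
      then have "tri M = 2*K*K + K" by simp
      then have "M + tri M + Suc K = 2*(K*K + 2*K + 1)" by (simp add: M_def)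
      then show ?thesis by simp
    qed
    then have e1: "(-1::complex)^(M + tri M + Suc K) = 1" by simp
    have "(-1)^M * r^tri M * (-1)^(Suc K) = (-1::complex)^(M + tri M + Suc K) * z^(2*tri M)"
      unfolding r_def rpow power_add by (simp only: ac_simps)
    then show ?thesis by (simp only: e1 mult_1)
  qed
  have "S * z^(2*M*M + (3*K + 4*tri K) + (Suc K + 4*tri (Suc K))) * (a*b*w)
      = ((-1)^M * r^tri M * (-1)^(Suc K)) * (c3 * ((1 - z) * c5))"
    unfolding A4 by (simp only: ac_simps)
  also have "\<dots> = z^(2*tri M) * (T * (a*b*w*z))" unfolding sgn A5 ..
  also have "\<dots> = (T * z^(2*tri M + 1)) * (a*b*w)" by (simp add: ac_simps)
  finally have "S * z^(2*M*M + (3*K + 4*tri K) + (Suc K + 4*tri (Suc K))) = T * z^(2*tri M + 1)"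
    using abw mult_right_cancel by blast
  then show ?thesis unfolding S_def T_def c3_def c4_def c5_def c6_def .
qed



definition evz :: "complex set \<Rightarrow> ratfun \<Rightarrow> (complex \<Rightarrow> complex) \<Rightarrow> bool" where
  "evz Z x f \<longleftrightarrow> (\<exists>A B. B \<noteq> 0 \<and> x = Fract A B \<and> (\<forall>c\<in>Z. poly B c \<noteq> 0 \<and> f c = poly A c / poly B c))"

lemma evz_cong: "evz Z x f \<Longrightarrow> (\<And>c. c \<in> Z \<Longrightarrow> f c = g c) \<Longrightarrow> evz Z x g"
  unfolding evz_def by metis

lemma evz_const: "evz Z (Fract [:a:] 1) (\<lambda>_. a)"
  unfolding evz_def by (rule exI[of _ "[:a:]"], rule exI[of _ 1]) simp

lemma evz_one: "evz Z 1 (\<lambda>_. 1)"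
  using evz_const[of Z 1] by (simp add: One_fract_def one_pCons)

lemma evz_zero: "evz Z 0 (\<lambda>_. 0)"
  using evz_const[of Z 0] by (simp add: Zero_fract_def)

lemma evz_qvar: "evz Z qvar (\<lambda>c. c)"
  unfolding evz_def qvar_def by (rule exI[of _ "[:0,1:]"], rule exI[of _ 1]) simp

lemma evz_add: "evz Z x f \<Longrightarrow> evz Z y g \<Longrightarrow> evz Z (x + y) (\<lambda>c. f c + g c)"
  unfolding evz_def
proof (elim exE conjE)
  fix A B C D assume *: "B \<noteq> 0" "x = Fract A B" "\<forall>c\<in>Z. poly B c \<noteq> 0 \<and> f c = poly A c / poly B c"
    "D \<noteq> 0" "y = Fract C D" "\<forall>c\<in>Z. poly D c \<noteq> 0 \<and> g c = poly C c / poly D c"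
  show "\<exists>A B. B \<noteq> 0 \<and> x + y = Fract A B \<and> (\<forall>c\<in>Z. poly B c \<noteq> 0 \<and> f c + g c = poly A c / poly B c)"
    by (rule exI[of _ "A * D + C * B"], rule exI[of _ "B * D"]) (use * in \<open>simp add: add_frac_eq\<close>)
qed

lemma evz_mult: "evz Z x f \<Longrightarrow> evz Z y g \<Longrightarrow> evz Z (x * y) (\<lambda>c. f c * g c)"
  unfolding evz_def
proof (elim exE conjE)
  fix A B C D assume *: "B \<noteq> 0" "x = Fract A B" "\<forall>c\<in>Z. poly B c \<noteq> 0 \<and> f c = poly A c / poly B c"
    "D \<noteq> 0" "y = Fract C D" "\<forall>c\<in>Z. poly D c \<noteq> 0 \<and> g c = poly C c / poly D c"
  show "\<exists>A B. B \<noteq> 0 \<and> x * y = Fract A B \<and> (\<forall>c\<in>Z. poly B c \<noteq> 0 \<and> f c * g c = poly A c / poly B c)"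
    by (rule exI[of _ "A * C"], rule exI[of _ "B * D"]) (use * in \<open>simp\<close>)
qed

lemma evz_uminus: "evz Z x f \<Longrightarrow> evz Z (- x) (\<lambda>c. - f c)"
  unfolding evz_def
proof (elim exE conjE)
  fix A B assume *: "B \<noteq> 0" "x = Fract A B" "\<forall>c\<in>Z. poly B c \<noteq> 0 \<and> f c = poly A c / poly B c"
  show "\<exists>A B. B \<noteq> 0 \<and> - x = Fract A B \<and> (\<forall>c\<in>Z. poly B c \<noteq> 0 \<and> - f c = poly A c / poly B c)"
    by (rule exI[of _ "- A"], rule exI[of _ "B"]) (use * in \<open>auto\<close>)
qed

lemma evz_diff: "evz Z x f \<Longrightarrow> evz Z y g \<Longrightarrow> evz Z (x - y) (\<lambda>c. f c - g c)"
  using evz_add[of Z x f "- y" "\<lambda>c. - g c"] evz_uminus[of Z y g] by simp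

lemma evz_inverse:
  assumes "evz Z x f" "Z \<noteq> {}" "\<And>c. c \<in> Z \<Longrightarrow> f c \<noteq> 0"
  shows "evz Z (inverse x) (\<lambda>c. inverse (f c))"
proof -
  from assms(1) obtain A B where *: "B \<noteq> 0" "x = Fract A B" "\<forall>c\<in>Z. poly B c \<noteq> 0 \<and> f c = poly A c / poly B c"
    unfolding evz_def by blast
  from assms(2) obtain c0 where c0: "c0 \<in> Z" by blast
  have "poly A c0 \<noteq> 0" using * assms(3)[OF c0] c0 by auto
  then have A: "A \<noteq> 0" by auto
  show ?thesis unfolding evz_def
    by (rule exI[of _ B], rule exI[of _ A]) (use * A assms(3) in \<open>auto\<close>)
qed

lemma evz_divide:
  assumes "evz Z x f" "evz Z y g" "Z \<noteq> {}" "\<And>c. c \<in> Z \<Longrightarrow> g c \<noteq> 0"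
  shows "evz Z (x / y) (\<lambda>c. f c / g c)"
  using evz_mult[OF assms(1) evz_inverse[OF assms(2-4)]] by (simp add: divide_inverse)

lemma evz_power: "evz Z x f \<Longrightarrow> evz Z (x ^ n) (\<lambda>c. f c ^ n)"
  by (induction n) (simp_all add: evz_one evz_mult)

lemma evz_powi:
  assumes "evz Z x f" "Z \<noteq> {}" "\<And>c. c \<in> Z \<Longrightarrow> f c \<noteq> 0"
  shows "evz Z (x powi e) (\<lambda>c. f c powi e)"
proof (cases "e \<ge> 0")
  case True
  then show ?thesis using evz_power[OF assms(1), of "nat e"] by (simp add: power_int_def)
next
  case False
  then show ?thesis using evz_power[OF evz_inverse[OF assms], of "nat (-e)"] by (simp add: power_int_def)
qed

lemma evz_sum: "(\<And>k. k < (n::nat) \<Longrightarrow> evz Z (g k) (h k)) \<Longrightarrow> evz Z (\<Sum>k<n. g k) (\<lambda>c. \<Sum>k<n. h k c)"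
  by (induction n) (simp_all add: evz_zero evz_add)

lemma evz_prod: "(\<And>k. k < (n::nat) \<Longrightarrow> evz Z (g k) (h k)) \<Longrightarrow> evz Z (\<Prod>k<n. g k) (\<lambda>c. \<Prod>k<n. h k c)"
  by (induction n) (simp_all add: evz_one evz_mult)

lemma evz_qpoch: "evz Z a fa \<Longrightarrow> evz Z b fb \<Longrightarrow> evz Z (qpoch a b k) (\<lambda>c. cp (fa c) (fb c) k)"
  unfolding qpoch_def cp_def
  by (rule evz_prod) (intro evz_diff evz_one evz_mult evz_power)

lemma evz_if: "evz Z x f \<Longrightarrow> evz Z y g \<Longrightarrow> evz Z (if P then x else y) (\<lambda>c. if P then f c else g c)"
  by (cases P) simp_all



lemma root_pow:
  assumes n: "n > 0" and cop: "coprime j n"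
  shows "(cis (2*pi*real j/real n))^m = 1 \<longleftrightarrow> n dvd m"
proof
  assume "n dvd m"
  then obtain s where m: "m = n * s" by blast
  have "(cis (2*pi*real j/real n))^m = cis (real m * (2*pi*real j/real n))" by (rule DeMoivre)
  also have "real m * (2*pi*real j/real n) = 2 * pi * real (j * s)" using n by (simp add: m field_simps)
  also have "cis (2 * pi * real (j * s)) = 1" by (rule cis_multiple_2pi) simp
  finally show "(cis (2*pi*real j/real n))^m = 1" .
next
  assume h: "(cis (2*pi*real j/real n))^m = 1"
  have "cis (real m * (2*pi*real j/real n)) = 1" using h by (simp add: DeMoivre)
  then have "cos (real m * (2*pi*real j/real n)) = 1"
    by (metis Re_complex_of_real cis.sel(1) one_complex.sel(1))
  then obtain k :: int where k: "real m * (2*pi*real j/real n) = of_int k * 2 * pi"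
    using cos_one_2pi_int by blast
  then have "real (m * j) = of_int k * real n" using n by (simp add: field_simps)
  then have "int (m * j) = k * int n" by (metis of_int_eq_iff of_int_mult of_int_of_nat_eq)
  then have "int n dvd int (m * j)" by simp
  then have "n dvd m * j" by (simp only: int_dvd_int_iff)
  then show "n dvd m" using cop by (metis coprime_commute coprime_dvd_mult_left_iff)
qed

lemma root_inj:
  assumes n: "n > 0" and i: "1 \<le> i" "i \<le> n" and j: "1 \<le> j" "j \<le> n"
    and eq: "cis (2*pi*real i/real n) = cis (2*pi*real j/real n)"
  shows "i = j"
proof -
  have "cis (2*pi*real i/real n - 2*pi*real j/real n) = 1"
    using eq by (simp flip: cis_divide)
  then have "cos (2*pi*real i/real n - 2*pi*real j/real n) = 1"
    by (metis Re_complex_of_real cis.sel(1) one_complex.sel(1))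
  then obtain k :: int where k: "2*pi*real i/real n - 2*pi*real j/real n = of_int k * 2 * pi"
    using cos_one_2pi_int by blast
  then have "2*pi*(real i - real j) = 2*pi*(of_int k * real n)" using n by (simp add: field_simps)
  then have "real i - real j = of_int k * real n" by simp
  then have kk: "int i - int j = k * int n" by (metis of_int_eq_iff of_int_mult of_int_of_nat_eq of_int_diff)
  have "k = 0"
  proof (rule ccontr)
    assume "k \<noteq> 0"
    then have "\<bar>k * int n\<bar> \<ge> int n" using n by (simp add: abs_mult)
    then show False using kk i j by linarith
  qed
  then show ?thesis using kk by simp
qed

lemma powi_cong:
  fixes z :: complex
  assumes "z ^ n = 1" "int n dvd (a - b)" and z: "z \<noteq> 0"
  shows "z powi a = z powi b"
proof -
  obtain s where s: "a - b = int n * s" using assms(2) by blast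
  have "z powi a = z powi (b + int n * s)" using s by (simp add: algebra_simps)
  also have "\<dots> = z powi b * (z powi int n) powi s" using z by (simp add: power_int_add power_int_mult)
  also have "\<dots> = z powi b" using assms(1) by simp
  finally show ?thesis .
qed

lemma finish:
  fixes z S T :: complex
  assumes "z \<noteq> 0" "S * z^X = T * z^Y" "z powi e = z powi (int Y - int X)"
  shows "S = T * z powi e"
proof -
  have "z powi e = z^Y / z^X" using assms(1,3) by (simp add: power_int_diff)
  then have "z powi e * z^X = z^Y" using assms(1) by simp
  then have "S * z^X = (T * z powi e) * z^X" using assms(2) by (simp add: mult.assoc)
  then show ?thesis using assms(1) mult_right_cancel by (metis power_not_zero)
qed

lemma even_exp: "int (2*tri (2*K)) - int (2*(2*K)*(2*K) + 4*K + 8*tri K) = -8*int K^2 - 2*int K"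
proof -
  have a: "2 * tri (2*K) + 2*K = (2*K)*(2*K)" using tri_2[of "2*K"] by simp
  have b: "2 * tri K + K = K*K" by (rule tri_2)
  have a': "2 * int (tri (2*K)) + 2 * int K = 4 * int K * int K" using arg_cong[OF a, of int] by simp
  have b': "2 * int (tri K) + int K = int K * int K" using arg_cong[OF b, of int] by simp
  show ?thesis using a' b' by (simp add: power2_eq_square algebra_simps)
qed

lemma odd_exp: "int (2*tri (2*K+1) + 1) - int (2*(2*K+1)*(2*K+1) + (3*K + 4*tri K) + (Suc K + 4*tri (Suc K)))
   = -8*int K^2 - 10*int K - 2"
proof -
  have a: "2 * tri (2*K+1) + (2*K+1) = (2*K+1)*(2*K+1)" by (rule tri_2)
  have b: "2 * tri K + K = K*K" by (rule tri_2)
  have a': "2 * int (tri (2*K+1)) + 2 * int K + 1 = (2 * int K + 1) * (2 * int K + 1)" using arg_cong[OF a, of int] by (simp add: algebra_simps)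
  have b': "2 * int (tri K) + int K = int K * int K" using arg_cong[OF b, of int] by simp
  show ?thesis using a' b' by (simp add: tri_Suc power2_eq_square algebra_simps)
qed



lemma odd_dvd4: assumes "odd (n::nat)" "n dvd 4 * m" shows "n dvd m"
proof -
  have c2: "coprime n 2" using assms(1) by simp
  have "coprime n (2*2)" using c2 coprime_mult_right_iff by blast
  then have "coprime n 4" by simp
  then show ?thesis using assms(2) coprime_dvd_mult_right_iff by blast
qed

lemma prim_facts:
  fixes z :: complex
  assumes n0: "n > 0" and odd: "odd n" and zp: "\<And>m. z^m = 1 \<longleftrightarrow> n dvd m"
  shows "z \<noteq> 0" "z^n = 1"
    "\<And>k. k < n \<Longrightarrow> cp (z^4) (z^4) k \<noteq> 0"
    "\<And>k. k < n \<Longrightarrow> cp (-(z^2)) (-(z^2)) k \<noteq> 0"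
proof -
  show zn: "z^n = 1" using zp by simp
  show "z \<noteq> 0" using zn n0 by (cases n) auto
  have bad: False if "z^(4*Suc j) = 1" "j < n - 1" for j
  proof -
    have "n dvd 4 * Suc j" using that(1) zp by simp
    then have "n dvd Suc j" using odd odd_dvd4 by blast
    then have "n \<le> Suc j" by (rule dvd_imp_le) simp
    then show False using that(2) by simp
  qed
  show "cp (z^4) (z^4) k \<noteq> 0" if k: "k < n" for k
    unfolding cp_def
  proof (subst prod_zero_iff)
    show "finite {..<k}" by simp
    show "\<not> (\<exists>j\<in>{..<k}. 1 - z ^ 4 * (z ^ 4) ^ j = 0)"
    proof
      assume "\<exists>j\<in>{..<k}. 1 - z ^ 4 * (z ^ 4) ^ j = 0"
      then obtain j where j: "j < k" "z ^ 4 * (z ^ 4) ^ j = 1" by auto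
      have "z^(4*Suc j) = 1" using j(2) by (simp add: power_mult power_add)
      moreover have "j < n - 1" using j k by linarith
      ultimately show False by (rule bad)
    qed
  qed
  show "cp (-(z^2)) (-(z^2)) k \<noteq> 0" if k: "k < n" for k
    unfolding cp_def
  proof (subst prod_zero_iff)
    show "finite {..<k}" by simp
    show "\<not> (\<exists>j\<in>{..<k}. 1 - (-(z^2)) * (-(z^2)) ^ j = 0)"
    proof
      assume "\<exists>j\<in>{..<k}. 1 - (-(z^2)) * (-(z^2)) ^ j = 0"
      then obtain j where j0: "j \<in> {..<k}" "1 - (-(z^2)) * (-(z^2)) ^ j = 0" by blast
      then have j: "j < k" "(-(z^2)) * (-(z^2)) ^ j = 1" by (simp, metis right_minus_eq)
      then have "(-(z^2)) ^ Suc j = 1" by simp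
      then have "((-(z^2)) ^ Suc j)^2 = 1" by simp
      then have "z^(4*Suc j) = 1" by (simp add: rpow power_mult_distrib flip: power_mult) (simp add: power_mult[symmetric] mult.commute power_add)
      moreover have "j < n - 1" using j k by linarith
      ultimately show False by (rule bad)
    qed
  qed
qed



lemma trunc:
  fixes z :: complex
  assumes "M < n" "z^(4*M+1) = 1"
  shows "(\<Sum>k<n. (cp z (z^4) k)^2 / (cp (z^4) (z^4) k)^2 * (-z)^k)
       = (\<Sum>k\<le>M. (cp z (z^4) k)^2 / (cp (z^4) (z^4) k)^2 * (-z)^k)"
proof (rule sum.mono_neutral_cong_right)
  show "{..M} \<subseteq> {..<n}" using assms(1) by auto
  show "\<forall>i\<in>{..<n} - {..M}. (cp z (z^4) i)^2 / (cp (z^4) (z^4) i)^2 * (-z)^i = 0"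
  proof
    fix i assume "i \<in> {..<n} - {..M}"
    then have i: "M < i" by auto
    have "cp z (z^4) i = 0" unfolding cp_def
    proof (rule prod_zero)
      have "z * (z^4)^M = z^(4*M+1)" by (simp add: power_mult power_add)
      also have "\<dots> = 1" by (rule assms(2))
      finally have "1 - z * (z^4)^M = 0" by simp
      then show "\<exists>a\<in>{..<i}. 1 - z * (z^4)^a = 0" using i by blast
    qed simp
    then show "(cp z (z^4) i)^2 / (cp (z^4) (z^4) i)^2 * (-z)^i = 0" by simp
  qed
qed simp_all

lemma even_wrap:
  fixes z :: complex
  assumes n0: "n > 0" and odd: "odd n" and zp: "\<And>m. z^m = 1 \<longleftrightarrow> n dvd m"
   and d: "n dvd 8*K+1" and lt: "2*K < n" and ce: "int n dvd (e - (-8*int K^2 - 2*int K))"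
  shows "(\<Sum>k<n. (cp z (z^4) k)^2 / (cp (z^4) (z^4) k)^2 * (-z)^k)
     = cp z (z^4) K * cp (z^2) (z^4) K * cp (-(z^3)) (z^4) K * cp (-(z^4)) (z^4) K / cp (z^4) (z^4) (2*K) * z powi e"
proof -
  note pf = prim_facts[OF n0 odd zp]
  have h: "z^(8*K+1) = 1" using zp[of "8*K+1"] d by blast
  have h4: "z^(4*(2*K)+1) = 1" using h by (simp add: mult.assoc)
  have E: "(\<Sum>k\<le>2*K. (cp z (z^4) k)^2 / (cp (z^4) (z^4) k)^2 * (-z)^k) * z^(2*(2*K)*(2*K) + 4*K + 8*tri K)
     = cp z (z^4) K * cp (z^2) (z^4) K * cp (-(z^3)) (z^4) K * cp (-(z^4)) (z^4) K / cp (z^4) (z^4) (2*K) * z^(2*tri (2*K))"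
    by (rule even_case[OF h]) (use pf(3) pf(4) lt in auto)
  have P: "z powi e = z powi (int (2*tri (2*K)) - int (2*(2*K)*(2*K) + 4*K + 8*tri K))"
    by (rule powi_cong[OF pf(2)]) (use ce pf(1) in \<open>simp_all only: even_exp not_False_eq_True\<close>)
  show ?thesis unfolding trunc[OF lt h4] by (rule finish[OF pf(1) E P])
qed

lemma odd_wrap:
  fixes z :: complex
  assumes n0: "n > 0" and odd: "odd n" and zp: "\<And>m. z^m = 1 \<longleftrightarrow> n dvd m"
   and d: "n dvd 8*K+5" and lt: "2*K+1 < n" and ce: "int n dvd (e - (-8*int K^2 - 10*int K - 2))"
  shows "(\<Sum>k<n. (cp z (z^4) k)^2 / (cp (z^4) (z^4) k)^2 * (-z)^k)
     = -((1 - z^2) * cp (-(z^3)) (z^4) K * cp (-(z^4)) (z^4) K * cp (z^5) (z^4) K * cp (z^6) (z^4) K / cp (z^4) (z^4) (2*K) * z powi e)"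
proof -
  note pf = prim_facts[OF n0 odd zp]
  have h: "z^(8*K+5) = 1" using zp[of "8*K+5"] d by blast
  have h4: "z^(4*(2*K+1)+1) = 1" using h by (simp add: algebra_simps)
  have E: "(\<Sum>k\<le>2*K+1. (cp z (z^4) k)^2 / (cp (z^4) (z^4) k)^2 * (-z)^k) * z^(2*(2*K+1)*(2*K+1) + (3*K + 4*tri K) + (Suc K + 4*tri (Suc K)))
     = -((1 - z^2) * cp (-(z^3)) (z^4) K * cp (-(z^4)) (z^4) K * cp (z^5) (z^4) K * cp (z^6) (z^4) K / cp (z^4) (z^4) (2*K)) * z^(2*tri (2*K+1) + 1)"
    by (rule odd_case[OF h]) (use pf(3) pf(4) lt in auto)
  have P: "z powi e = z powi (int (2*tri (2*K+1) + 1) - int (2*(2*K+1)*(2*K+1) + (3*K + 4*tri K) + (Suc K + 4*tri (Suc K))))"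
    by (rule powi_cong[OF pf(2)]) (use ce pf(1) in \<open>simp_all only: odd_exp not_False_eq_True\<close>)
  have "(\<Sum>k\<le>2*K+1. (cp z (z^4) k)^2 / (cp (z^4) (z^4) k)^2 * (-z)^k)
     = -((1 - z^2) * cp (-(z^3)) (z^4) K * cp (-(z^4)) (z^4) K * cp (z^5) (z^4) K * cp (z^6) (z^4) K / cp (z^4) (z^4) (2*K)) * z powi e"
    by (rule finish[OF pf(1) E P])
  then show ?thesis unfolding trunc[OF lt h4] by simp
qed



lemma point_id:
  fixes z :: complex
  assumes n0: "n > 0" and odd: "odd n" and zp: "\<And>m. z^m = 1 \<longleftrightarrow> n dvd m"
  shows "(\<Sum>k<n. (cp z (z^4) k)^2 / (cp (z^4) (z^4) k)^2 * (-z)^k) =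
    (if n mod 8 = 1 then
       cp z (z^4) ((n-1) div 8) * cp (z^2) (z^4) ((n-1) div 8)
       * cp (-(z^3)) (z^4) ((n-1) div 8) * cp (-(z^4)) (z^4) ((n-1) div 8)
       / cp (z^4) (z^4) ((n-1) div 4) * z powi ((1 - int n ^ 2) div 8)
     else if n mod 8 = 3 then
       cp z (z^4) ((3*n-1) div 8) * cp (z^2) (z^4) ((3*n-1) div 8)
       * cp (-(z^3)) (z^4) ((3*n-1) div 8) * cp (-(z^4)) (z^4) ((3*n-1) div 8)
       / cp (z^4) (z^4) ((3*n-1) div 4) * z powi ((1 - int n ^ 2) div 8)
     else if n mod 8 = 5 then
       - ((1 - z^2) * cp (-(z^3)) (z^4) ((n-5) div 8) * cp (-(z^4)) (z^4) ((n-5) div 8)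
          * cp (z^5) (z^4) ((n-5) div 8) * cp (z^6) (z^4) ((n-5) div 8)
          / cp (z^4) (z^4) ((n-5) div 4) * z powi ((9 - int n ^ 2) div 8))
     else
       - ((1 - z^2) * cp (-(z^3)) (z^4) ((3*n-5) div 8) * cp (-(z^4)) (z^4) ((3*n-5) div 8)
          * cp (z^5) (z^4) ((3*n-5) div 8) * cp (z^6) (z^4) ((3*n-5) div 8)
          / cp (z^4) (z^4) ((3*n-5) div 4) * z powi ((9 - int n ^ 2) div 8)))"
proof -
  define t where "t = n div 8"
  have cases: "n = 8*t+1 \<or> n = 8*t+3 \<or> n = 8*t+5 \<or> n = 8*t+7" using odd unfolding t_def by presburger
  show ?thesis
  proof (cases "n = 8*t+1")
    case True
    have m: "n mod 8 = 1" using True by simp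
    have i1: "(n-1) div 8 = t" "(n-1) div 4 = 2*t" using True by simp_all
    have ee: "1 - int n^2 = 8 * (-8*int t^2 - 2*int t)" using True by (simp add: power2_eq_square algebra_simps)
    have e: "(1 - int n^2) div 8 = -8*int t^2 - 2*int t" unfolding ee by simp
    have W: "(\<Sum>k<n. (cp z (z^4) k)^2 / (cp (z^4) (z^4) k)^2 * (-z)^k)
     = cp z (z^4) t * cp (z^2) (z^4) t * cp (-(z^3)) (z^4) t * cp (-(z^4)) (z^4) t / cp (z^4) (z^4) (2*t) * z powi ((1 - int n^2) div 8)"
      by (rule even_wrap[OF n0 odd zp]) (use True e in simp_all)
    show ?thesis using W m i1 by simp
  next
    case F1: False
    show ?thesis
    proof (cases "n = 8*t+3")
      case True
      have m: "n mod 8 = 3" using True by simp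
      have i1: "(3*n-1) div 8 = 3*t+1" "(3*n-1) div 4 = 2*(3*t+1)" using True by simp_all
      have ee: "1 - int n^2 = 8 * (-8*int t^2 - 6*int t - 1)" using True by (simp add: power2_eq_square algebra_simps)
      have e: "(1 - int n^2) div 8 = -8*int t^2 - 6*int t - 1" unfolding ee by simp
      have ce: "(1 - int n^2) div 8 - (-8*int (3*t+1)^2 - 2*int (3*t+1)) = int n * int n"
        unfolding e using True by (simp add: power2_eq_square algebra_simps)
      have W: "(\<Sum>k<n. (cp z (z^4) k)^2 / (cp (z^4) (z^4) k)^2 * (-z)^k)
       = cp z (z^4) (3*t+1) * cp (z^2) (z^4) (3*t+1) * cp (-(z^3)) (z^4) (3*t+1) * cp (-(z^4)) (z^4) (3*t+1) / cp (z^4) (z^4) (2*(3*t+1)) * z powi ((1 - int n^2) div 8)"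
      proof (rule even_wrap[OF n0 odd zp])
        show "n dvd 8*(3*t+1)+1" using True by (simp add: dvd_def) (rule exI[of _ 3], simp)
        show "2*(3*t+1) < n" using True by simp
        show "int n dvd ((1 - int n^2) div 8 - (-8*int (3*t+1)^2 - 2*int (3*t+1)))" unfolding ce by simp
      qed
      show ?thesis using W m i1 F1 by simp
    next
      case F3: False
      show ?thesis
      proof (cases "n = 8*t+5")
        case True
        have m: "n mod 8 = 5" using True by simp
        have i1: "(n-5) div 8 = t" "(n-5) div 4 = 2*t" using True by simp_all
        have ee: "9 - int n^2 = 8 * (-8*int t^2 - 10*int t - 2)" using True by (simp add: power2_eq_square algebra_simps)
        have e: "(9 - int n^2) div 8 = -8*int t^2 - 10*int t - 2" unfolding ee by simp
        have W: "(\<Sum>k<n. (cp z (z^4) k)^2 / (cp (z^4) (z^4) k)^2 * (-z)^k)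
         = -((1 - z^2) * cp (-(z^3)) (z^4) t * cp (-(z^4)) (z^4) t * cp (z^5) (z^4) t * cp (z^6) (z^4) t / cp (z^4) (z^4) (2*t) * z powi ((9 - int n^2) div 8))"
          by (rule odd_wrap[OF n0 odd zp]) (use True e in simp_all)
        show ?thesis using W m i1 F1 F3 by simp
      next
        case F5: False
        have T: "n = 8*t+7" using cases F1 F3 F5 by blast
        have m: "n mod 8 = 7" using T by simp
        have i1: "(3*n-5) div 8 = 3*t+2" "(3*n-5) div 4 = 2*(3*t+2)" using T by simp_all
        have ee: "9 - int n^2 = 8 * (-8*int t^2 - 14*int t - 5)" using T by (simp add: power2_eq_square algebra_simps)
        have e: "(9 - int n^2) div 8 = -8*int t^2 - 14*int t - 5" unfolding ee by simp
        have ce: "(9 - int n^2) div 8 - (-8*int (3*t+2)^2 - 10*int (3*t+2) - 2) = int n * int n"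
          unfolding e using T by (simp add: power2_eq_square algebra_simps)
        have W: "(\<Sum>k<n. (cp z (z^4) k)^2 / (cp (z^4) (z^4) k)^2 * (-z)^k)
         = -((1 - z^2) * cp (-(z^3)) (z^4) (3*t+2) * cp (-(z^4)) (z^4) (3*t+2) * cp (z^5) (z^4) (3*t+2) * cp (z^6) (z^4) (3*t+2) / cp (z^4) (z^4) (2*(3*t+2)) * z powi ((9 - int n^2) div 8))"
        proof (rule odd_wrap[OF n0 odd zp])
          show "n dvd 8*(3*t+2)+5" using T by (simp add: dvd_def) (rule exI[of _ 3], simp)
          show "2*(3*t+2)+1 < n" using T by simp
          show "int n dvd ((9 - int n^2) div 8 - (-8*int (3*t+2)^2 - 10*int (3*t+2) - 2))" unfolding ce by simp
        qed
        show ?thesis using W m i1 F1 F3 F5 by simp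
      qed
    qed
  qed
qed


lemma evz_to_cong:
  fixes w :: "nat \<Rightarrow> complex"
  assumes ev: "evz (w ` J) (x - y) F" and F0: "\<And>c. c \<in> w ` J \<Longrightarrow> F c = 0"
    and fin: "finite J" and inj: "inj_on w J"
  shows "ratfun_cong x y (\<Prod>j\<in>J. [:-w j, 1:])"
proof -
  obtain A B where B: "B \<noteq> 0" "x - y = Fract A B"
    and v: "\<forall>c\<in>w`J. poly B c \<noteq> 0 \<and> F c = poly A c / poly B c"
    using ev unfolding evz_def by blast
  have Bnz: "poly B (w j) \<noteq> 0" if "j \<in> J" for j using v that by blast
  have A0: "poly A (w j) = 0" if "j \<in> J" for j
  proof -
    have "F (w j) = poly A (w j) / poly B (w j)" using v that by blast
    moreover have "F (w j) = 0" using F0 that by blast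
    ultimately show ?thesis using Bnz[OF that] by simp
  qed
  have pe: "prime_elem [:-w j, 1:]" for j by (rule prime_elem_linear_field_poly) simp
  have cop: "coprime B (\<Prod>j\<in>J. [:-w j, 1:])"
  proof (rule prod_coprime_right)
    fix j assume j: "j \<in> J"
    have "\<not> [:-w j, 1:] dvd B" unfolding poly_eq_0_iff_dvd[symmetric] using Bnz[OF j] .
    then have "coprime [:-w j, 1:] B" by (rule prime_elem_imp_coprime[OF pe])
    then show "coprime B [:-w j, 1:]" by (simp only: coprime_commute[of B])
  qed
  have dvG: "(\<Prod>j\<in>G. [:-w j, 1:]) dvd A" if "finite G" "G \<subseteq> J" for G
    using that
  proof (induction G rule: finite_induct)
    case empty then show ?case by (simp only: prod.empty one_dvd)
  next
    case (insert a G)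
    have aJ: "a \<in> J" and GJ: "G \<subseteq> J" using insert.prems by auto
    have d1: "[:-w a, 1:] dvd A" unfolding poly_eq_0_iff_dvd[symmetric] using A0[OF aJ] .
    have "poly (\<Prod>j\<in>G. [:-w j, 1:]) (w a) = (\<Prod>j\<in>G. poly [:-w j, 1:] (w a))" by (rule poly_prod)
    also have "\<dots> = (\<Prod>j\<in>G. w a - w j)" by (rule prod.cong) simp_all
    also have "\<dots> \<noteq> 0"
    proof -
      have "w a - w j \<noteq> 0" if "j \<in> G" for j
      proof
        assume "w a - w j = 0"
        then have "w a = w j" by simp
        moreover have "j \<in> J" using GJ that by blast
        ultimately have "a = j" by (rule inj_onD[OF inj _ aJ])
        then show False using insert.hyps(2) that by simp
      qed
      then show ?thesis by (subst prod_zero_iff[OF insert.hyps(1)]) blast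
    qed
    finally have "\<not> [:-w a, 1:] dvd (\<Prod>j\<in>G. [:-w j, 1:])" unfolding poly_eq_0_iff_dvd[symmetric] .
    then have c: "coprime [:-w a, 1:] (\<Prod>j\<in>G. [:-w j, 1:])" by (rule prime_elem_imp_coprime[OF pe])
    have "[:-w a, 1:] * (\<Prod>j\<in>G. [:-w j, 1:]) dvd A" by (rule divides_mult[OF d1 insert.IH[OF GJ] c])
    then show ?case by (simp only: prod.insert[OF insert.hyps(1,2)])
  qed
  have dv: "(\<Prod>j\<in>J. [:-w j, 1:]) dvd A" using dvG[OF fin] by blast
  show ?thesis unfolding ratfun_cong_def using B cop dv by blast
qed

theorem theorem4:
  fixes n :: nat
  assumes "n > 0" and "odd n"
  defines "q \<equiv> qvar"
  shows "ratfun_cong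
    (\<Sum>k<n. (qpoch q (q^4) k)^2 / (qpoch (q^4) (q^4) k)^2 * (-q)^k)
    (if n mod 8 = 1 then
       qpoch q (q^4) ((n-1) div 8) * qpoch (q^2) (q^4) ((n-1) div 8)
       * qpoch (-(q^3)) (q^4) ((n-1) div 8) * qpoch (-(q^4)) (q^4) ((n-1) div 8)
       / qpoch (q^4) (q^4) ((n-1) div 4) * q powi ((1 - int n ^ 2) div 8)
     else if n mod 8 = 3 then
       qpoch q (q^4) ((3*n-1) div 8) * qpoch (q^2) (q^4) ((3*n-1) div 8)
       * qpoch (-(q^3)) (q^4) ((3*n-1) div 8) * qpoch (-(q^4)) (q^4) ((3*n-1) div 8)
       / qpoch (q^4) (q^4) ((3*n-1) div 4) * q powi ((1 - int n ^ 2) div 8)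
     else if n mod 8 = 5 then
       - ((1 - q^2) * qpoch (-(q^3)) (q^4) ((n-5) div 8) * qpoch (-(q^4)) (q^4) ((n-5) div 8)
          * qpoch (q^5) (q^4) ((n-5) div 8) * qpoch (q^6) (q^4) ((n-5) div 8)
          / qpoch (q^4) (q^4) ((n-5) div 4) * q powi ((9 - int n ^ 2) div 8))
     else
       - ((1 - q^2) * qpoch (-(q^3)) (q^4) ((3*n-5) div 8) * qpoch (-(q^4)) (q^4) ((3*n-5) div 8)
          * qpoch (q^5) (q^4) ((3*n-5) div 8) * qpoch (q^6) (q^4) ((3*n-5) div 8)
          / qpoch (q^4) (q^4) ((3*n-5) div 4) * q powi ((9 - int n ^ 2) div 8)))
    (cyclotomic n)"
proof -
  define J where "J = {j. 1 \<le> j \<and> j \<le> n \<and> coprime j n}"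
  define w where "w = (\<lambda>j::nat. cis (2*pi*real j/real n))"
  define Z where "Z = w ` J"
  have finJ: "finite J" unfolding J_def by simp
  have cyc: "cyclotomic n = (\<Prod>j\<in>J. [:- w j, 1:])" by (simp add: cyclotomic_def J_def w_def)
  have oneJ: "1 \<in> J" using assms(1) by (simp add: J_def)
  have Zne: "Z \<noteq> {}" unfolding Z_def using oneJ by blast
  have zp: "\<And>m. c^m = 1 \<longleftrightarrow> n dvd m" if "c \<in> Z" for c
  proof -
    from that obtain j where j: "j \<in> J" "c = w j" by (auto simp: Z_def)
    show "\<And>m. c^m = 1 \<longleftrightarrow> n dvd m" using root_pow[OF assms(1), of j] j by (simp add: J_def w_def)
  qed
  have pf: "c \<noteq> 0" "\<And>k. k < n \<Longrightarrow> cp (c^4) (c^4) k \<noteq> 0" if "c \<in> Z" for c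
    using prim_facts[OF assms(1) assms(2) zp[OF that]] by auto
  have lts: "(n-1) div 4 < n" "(3*n-1) div 4 < n" "(n-5) div 4 < n" "(3*n-5) div 4 < n"
    using assms(1) by auto
  have nzs: "\<And>c. c \<in> Z \<Longrightarrow> cp (c^4) (c^4) ((n-1) div 4) \<noteq> 0"
    "\<And>c. c \<in> Z \<Longrightarrow> cp (c^4) (c^4) ((3*n-1) div 4) \<noteq> 0"
    "\<And>c. c \<in> Z \<Longrightarrow> cp (c^4) (c^4) ((n-5) div 4) \<noteq> 0"
    "\<And>c. c \<in> Z \<Longrightarrow> cp (c^4) (c^4) ((3*n-5) div 4) \<noteq> 0"
    using pf(2) lts by blast+
  have ev: "evz Z
    ((\<Sum>k<n. (qpoch q (q^4) k)^2 / (qpoch (q^4) (q^4) k)^2 * (-q)^k) -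
    (if n mod 8 = 1 then
       qpoch q (q^4) ((n-1) div 8) * qpoch (q^2) (q^4) ((n-1) div 8)
       * qpoch (-(q^3)) (q^4) ((n-1) div 8) * qpoch (-(q^4)) (q^4) ((n-1) div 8)
       / qpoch (q^4) (q^4) ((n-1) div 4) * q powi ((1 - int n ^ 2) div 8)
     else if n mod 8 = 3 then
       qpoch q (q^4) ((3*n-1) div 8) * qpoch (q^2) (q^4) ((3*n-1) div 8)
       * qpoch (-(q^3)) (q^4) ((3*n-1) div 8) * qpoch (-(q^4)) (q^4) ((3*n-1) div 8)
       / qpoch (q^4) (q^4) ((3*n-1) div 4) * q powi ((1 - int n ^ 2) div 8)
     else if n mod 8 = 5 then
       - ((1 - q^2) * qpoch (-(q^3)) (q^4) ((n-5) div 8) * qpoch (-(q^4)) (q^4) ((n-5) div 8)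
          * qpoch (q^5) (q^4) ((n-5) div 8) * qpoch (q^6) (q^4) ((n-5) div 8)
          / qpoch (q^4) (q^4) ((n-5) div 4) * q powi ((9 - int n ^ 2) div 8))
     else
       - ((1 - q^2) * qpoch (-(q^3)) (q^4) ((3*n-5) div 8) * qpoch (-(q^4)) (q^4) ((3*n-5) div 8)
          * qpoch (q^5) (q^4) ((3*n-5) div 8) * qpoch (q^6) (q^4) ((3*n-5) div 8)
          / qpoch (q^4) (q^4) ((3*n-5) div 4) * q powi ((9 - int n ^ 2) div 8))))
    (\<lambda>z. (\<Sum>k<n. (cp z (z^4) k)^2 / (cp (z^4) (z^4) k)^2 * (-z)^k) -
    (if n mod 8 = 1 then
       cp z (z^4) ((n-1) div 8) * cp (z^2) (z^4) ((n-1) div 8)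
       * cp (-(z^3)) (z^4) ((n-1) div 8) * cp (-(z^4)) (z^4) ((n-1) div 8)
       / cp (z^4) (z^4) ((n-1) div 4) * z powi ((1 - int n ^ 2) div 8)
     else if n mod 8 = 3 then
       cp z (z^4) ((3*n-1) div 8) * cp (z^2) (z^4) ((3*n-1) div 8)
       * cp (-(z^3)) (z^4) ((3*n-1) div 8) * cp (-(z^4)) (z^4) ((3*n-1) div 8)
       / cp (z^4) (z^4) ((3*n-1) div 4) * z powi ((1 - int n ^ 2) div 8)
     else if n mod 8 = 5 then
       - ((1 - z^2) * cp (-(z^3)) (z^4) ((n-5) div 8) * cp (-(z^4)) (z^4) ((n-5) div 8)
          * cp (z^5) (z^4) ((n-5) div 8) * cp (z^6) (z^4) ((n-5) div 8)
          / cp (z^4) (z^4) ((n-5) div 4) * z powi ((9 - int n ^ 2) div 8))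
     else
       - ((1 - z^2) * cp (-(z^3)) (z^4) ((3*n-5) div 8) * cp (-(z^4)) (z^4) ((3*n-5) div 8)
          * cp (z^5) (z^4) ((3*n-5) div 8) * cp (z^6) (z^4) ((3*n-5) div 8)
          / cp (z^4) (z^4) ((3*n-5) div 4) * z powi ((9 - int n ^ 2) div 8))))"
    unfolding q_def
    apply (intro evz_diff evz_sum evz_if evz_mult evz_divide evz_uminus evz_powi evz_power evz_qpoch evz_qvar evz_one Zne)
    using pf nzs by auto
  have inj: "inj_on w J"
  proof (rule inj_onI)
    fix i j assume "i \<in> J" "j \<in> J" "w i = w j"
    then show "i = j" using root_inj[OF assms(1), of i j] by (simp add: J_def w_def)
  qed
  show ?thesis unfolding cyc
  proof (rule evz_to_cong[OF ev[unfolded Z_def] _ finJ inj])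
    fix c assume c: "c \<in> w ` J"
    then have cZ: "c \<in> Z" by (simp add: Z_def)
    show "(\<lambda>z. (\<Sum>k<n. (cp z (z^4) k)^2 / (cp (z^4) (z^4) k)^2 * (-z)^k) -
    (if n mod 8 = 1 then
       cp z (z^4) ((n-1) div 8) * cp (z^2) (z^4) ((n-1) div 8)
       * cp (-(z^3)) (z^4) ((n-1) div 8) * cp (-(z^4)) (z^4) ((n-1) div 8)
       / cp (z^4) (z^4) ((n-1) div 4) * z powi ((1 - int n ^ 2) div 8)
     else if n mod 8 = 3 then
       cp z (z^4) ((3*n-1) div 8) * cp (z^2) (z^4) ((3*n-1) div 8)
       * cp (-(z^3)) (z^4) ((3*n-1) div 8) * cp (-(z^4)) (z^4) ((3*n-1) div 8)
       / cp (z^4) (z^4) ((3*n-1) div 4) * z powi ((1 - int n ^ 2) div 8)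
     else if n mod 8 = 5 then
       - ((1 - z^2) * cp (-(z^3)) (z^4) ((n-5) div 8) * cp (-(z^4)) (z^4) ((n-5) div 8)
          * cp (z^5) (z^4) ((n-5) div 8) * cp (z^6) (z^4) ((n-5) div 8)
          / cp (z^4) (z^4) ((n-5) div 4) * z powi ((9 - int n ^ 2) div 8))
     else
       - ((1 - z^2) * cp (-(z^3)) (z^4) ((3*n-5) div 8) * cp (-(z^4)) (z^4) ((3*n-5) div 8)
          * cp (z^5) (z^4) ((3*n-5) div 8) * cp (z^6) (z^4) ((3*n-5) div 8)
          / cp (z^4) (z^4) ((3*n-5) div 4) * z powi ((9 - int n ^ 2) div 8)))) c = 0"
      using point_id[OF assms(1) assms(2) zp[OF cZ]] by simp
  qed
qed

end
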